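(* Let $n_1,n_2,n^*_1,n^*_2$ be integers with $1\le n_1\le n^*_1\le n^*_2\le n_2$, $n=n_1+n_2$, $n^*=n^*_1+n^*_2$. Let $X_1,\dots,X_n$ be dependent nonnegative random variables sharing an Archimedean survival copula with generator $\psi_1$ ($\phi_1=\psi_1^{-1}$), with $X_i\sim F_1(\lambda_1x)$ for $i\le n_1$ and $X_j\sim F_2(\lambda_2x)$ for $j>n_1$; let $Y_1,\dots,Y_{n^*}$ be dependent nonnegative random variables sharing an Archimedean survival copula with generator $\psi_2$ ($\phi_2=\psi_2^{-1}$), with $Y_i\sim F_1(\mu_1x)$ for $i\le n^*_1$ and $Y_j\sim F_2(\mu_2x)$ for $j>n^*_1$. Let $X_{1:n}(n_1,n_2)=\min_iX_i$, $Y_{1:n^*}(n^*_1,n^*_2)=\min_iY_i$. Assume $r_1(x)\le r_2(x)$ for all $x>0$, $\boldsymbol\lambda=(\lambda_1,\lambda_2),\boldsymbol\mu=(\mu_1,\mu_2)\in\mathcal E_+$, $(n_1,n_2)\succeq_w(n^*_1,n^*_2)$, $\phi_2\circ\psi_1$ is super-additive, $\psi_1$ or $\psi_2$ is log-convex, and $r_1$ or $r_2$ is increasing. Then $$(\underbrace{\lambda_1,\dots,\lambda_1}_{n^*_1},\underbrace{\lambda_2,\dots,\lambda_2}_{n^*_2})\succeq_{w}(\underbrace{\mu_1,\dots,\mu_1}_{n^*_1},\underbrace{\mu_2,\dots,\mu_2}_{n^*_2})\ \Longrightarrow\ X_{1:n}(n_1,n_2)\le_{st}Y_{1:n^*}(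n^*_1,n^*_2).$$
   Context: $Z\sim F(\lambda x)$ means $Z$ has distribution function $x\mapsto F(\lambda x)$. Archimedean generator: a continuous nonincreasing $\psi:[0,\infty)\to[0,1]$ with $\psi(0)=1$, $\psi(\infty)=0$, which is $m$-monotone; $\phi=\psi^{-1}$. $Z_1,\dots,Z_m$ with marginal survival functions $\bar G_i$ share an Archimedean survival copula with generator $\psi$ if $P(Z_1>z_1,\dots,Z_m>z_m)=\psi(\sum_i\phi(\bar G_i(z_i)))$. $F_1,F_2$ are absolutely continuous distribution functions on $[0,\infty)$ with densities $f_k$ and hazard rates $r_k=f_k/(1-F_k)$. Super-additive: $g(x)+g(y)\le g(x+y)$. $\mathcal E_+=\{(x_1,x_2):0<x_1\le x_2\}$. For $\boldsymbol a,\boldsymbol b\in\mathbb R^k$ with increasingly ordered coordinates $a_{(1)}\le\dots\le a_{(k)}$: $\boldsymbol a\succeq_w\boldsymbol b$ means $\sum_{i=l}^ka_{(i)}\ge\sum_{i=l}^kb_{(i)}$ for all $l$. $U\le_{st}V$ means $P(U>x)\le P(V>x)$ for all $x$. Increasing/decreasing are in the weak sense. *)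

theory Defs
  imports "HOL-Probability.Probability"
begin

definition d_monotone :: "nat \<Rightarrow> (real \<Rightarrow> real) \<Rightarrow> bool" where
  "d_monotone d \<psi> \<longleftrightarrow>
     (\<forall>k. k + 2 < d \<longrightarrow> (\<forall>x>0. ((deriv ^^ k) \<psi>) differentiable (at x))) \<and>
     (\<forall>k. k + 2 \<le> d \<longrightarrow> (\<forall>x>0. 0 \<le> (-1) ^ k * (deriv ^^ k) \<psi> x)) \<and>
     (\<forall>x y. 0 < x \<longrightarrow> x \<le> y \<longrightarrow>
        (-1) ^ (d - 2) * (deriv ^^ (d - 2)) \<psi> y \<le> (-1) ^ (d - 2) * (deriv ^^ (d - 2)) \<psi> x) \<and>
     convex_on {0<..} (\<lambda>x. (-1) ^ (d - 2) * (deriv ^^ (d - 2)) \<psi> x)"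

definition archimedean_generator :: "nat \<Rightarrow> (real \<Rightarrow> real) \<Rightarrow> bool" where
  "archimedean_generator m \<psi> \<longleftrightarrow>
     continuous_on {0..} \<psi> \<and>
     (\<forall>x\<ge>0. 0 \<le> \<psi> x \<and> \<psi> x \<le> 1) \<and>
     (\<forall>x y. 0 \<le> x \<longrightarrow> x \<le> y \<longrightarrow> \<psi> y \<le> \<psi> x) \<and>
     \<psi> 0 = 1 \<and> (\<psi> \<longlongrightarrow> 0) at_top \<and>
     d_monotone m \<psi>"

text \<open>phi = psi^{-1} (generalized inverse, valued in [0,inf]; phi 0 = inf if psi > 0).\<close>
definition gen_inv :: "(real \<Rightarrow> real) \<Rightarrow> real \<Rightarrow> ereal" where
  "gen_inv \<psi> t = Inf (ereal ` {x. 0 \<le> x \<and> \<psi> x \<le> t})"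

definition gen_ext :: "(real \<Rightarrow> real) \<Rightarrow> ereal \<Rightarrow> real" where
  "gen_ext \<psi> e = (if e = \<infinity> then 0 else \<psi> (real_of_ereal e))"

definition arch_survival_copula ::
    "'a measure \<Rightarrow> nat \<Rightarrow> (nat \<Rightarrow> 'a \<Rightarrow> real) \<Rightarrow> (nat \<Rightarrow> real \<Rightarrow> real) \<Rightarrow> (real \<Rightarrow> real) \<Rightarrow> bool" where
  "arch_survival_copula M m Z Gbar \<psi> \<longleftrightarrow>
     (\<forall>z :: nat \<Rightarrow> real.
        measure M {\<omega> \<in> space M. \<forall>i<m. Z i \<omega> > z i}
          = gen_ext \<psi> (\<Sum>i<m. gen_inv \<psi> (Gbar i (z i))))"

definition abs_cont_cdf :: "(real \<Rightarrow> real) \<Rightarrow> (real \<Rightarrow> real) \<Rightarrow> bool" where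
  "abs_cont_cdf F f \<longleftrightarrow>
     (\<forall>x<0. F x = 0) \<and> (\<forall>x\<ge>0. 0 \<le> f x) \<and>
     (\<forall>x\<ge>0. (f has_integral F x) {0..x}) \<and> (F \<longlongrightarrow> 1) at_top"

definition hazard :: "(real \<Rightarrow> real) \<Rightarrow> (real \<Rightarrow> real) \<Rightarrow> real \<Rightarrow> real" where
  "hazard F f x = f x / (1 - F x)"

definition super_additive :: "(real \<Rightarrow> ereal) \<Rightarrow> bool" where
  "super_additive g \<longleftrightarrow> (\<forall>x y. 0 \<le> x \<longrightarrow> 0 \<le> y \<longrightarrow> g x + g y \<le> g (x + y))"

definition log_convex :: "(real \<Rightarrow> real) \<Rightarrow> bool" where
  "log_convex \<psi> \<longleftrightarrow> (\<forall>x y t. 0 \<le> x \<longrightarrow> 0 \<le> y \<longrightarrow> 0 < t \<longrightarrow> t < 1 \<longrightarrow>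
      \<psi> (t * x + (1 - t) * y) \<le> \<psi> x powr t * \<psi> y powr (1 - t))"

text \<open>Weak (sub)majorization a \<succeq>_w b: sums of the largest components dominate.\<close>
definition wmaj :: "real list \<Rightarrow> real list \<Rightarrow> bool" where
  "wmaj a b \<longleftrightarrow> length a = length b \<and>
     (\<forall>l < length a. (\<Sum>i=l..<length a. sort b ! i) \<le> (\<Sum>i=l..<length a. sort a ! i))"

end

theory Submission
  imports Defs
begin
lemma GC_pos:
  fixes u v fu fv :: "real \<Rightarrow> real"
  assumes st: "s \<le> t" and cu: "continuous_on {s..t} u" and cv: "continuous_on {s..t} v"
    and iu: "\<And>y. y \<in> {s..t} \<Longrightarrow> (fu has_integral (u s - u y)) {s..y}"
    and iv: "\<And>y. y \<in> {s..t} \<Longrightarrow> (fv has_integral (v s - v y)) {s..y}"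
    and fvnn: "\<And>y. y \<in> {s..t} \<Longrightarrow> 0 \<le> fv y"
    and vpos: "\<And>y. y \<in> {s..t} \<Longrightarrow> 0 < v y"
    and upos: "\<And>y. y \<in> {s..t} \<Longrightarrow> 0 < u y"
    and cond: "\<And>y. y \<in> {s<..t} \<Longrightarrow> 0 < u y \<Longrightarrow> fu y * v y \<le> fv y * u y"
  shows "u s * v t \<le> u t * v s"
proof (rule ccontr)
  assume H: "\<not> ?thesis"
  define q where "q = (\<lambda>y. u y / v y)"
  have cq: "continuous_on {s..t} q" unfolding q_def
  proof (intro continuous_on_divide cu cv ballI)
    fix x assume "x \<in> {s..t}" then show "v x \<noteq> 0" using vpos[of x] by auto
  qed
  have qts: "q t < q s" using H vpos[of s] vpos[of t] st
    by (auto simp: q_def divide_simps mult.commute)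
  define B where "B = {s..t} \<inter> q -` {q s..}"
  have clB: "closed B" unfolding B_def by (rule continuous_closed_preimage[OF cq]) auto
  have sB: "s \<in> B" using st by (auto simp: B_def)
  have bB: "bdd_above B" unfolding B_def by (rule bdd_aboveI[of _ t]) auto
  define y0 where "y0 = Sup B"
  have y0B: "y0 \<in> B" unfolding y0_def using closed_contains_Sup[OF _ bB clB] sB by auto
  have y0r: "s \<le> y0" "y0 \<le> t" "q s \<le> q y0" using y0B by (auto simp: B_def)
  have qle: "q y \<le> q y0" if "y \<in> {y0..t}" for y
  proof (cases "y = y0")
    case False
    then have "y > y0" using that by auto
    then have "y \<notin> B" using cSup_upper[OF _ bB] unfolding y0_def by force
    then show ?thesis using that y0r by (auto simp: B_def)
  qed simp
  define q0 where "q0 = q y0"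
  have q0pos: "0 < q0" unfolding q0_def q_def using upos vpos y0r by auto
  have ule: "u y \<le> q0 * v y" if "y \<in> {y0..t}" for y
  proof -
    have "u y / v y \<le> q0" using qle[OF that] unfolding q0_def q_def by simp
    then show ?thesis using vpos[of y] that y0r by (simp add: pos_divide_le_eq)
  qed
  have y0st: "y0 \<in> {s..t}" and tst: "t \<in> {s..t}" using y0r st by auto
  have ft: "fu integrable_on {y0..t}"
    using integrable_subinterval_real[OF has_integral_integrable[OF iu[OF tst]], of y0 t] y0r by auto
  then obtain ju where ju: "(fu has_integral ju) {y0..t}" by auto
  have gt: "fv integrable_on {y0..t}"
    using integrable_subinterval_real[OF has_integral_integrable[OF iv[OF tst]], of y0 t] y0r by auto
  then obtain jv where jv: "(fv has_integral jv) {y0..t}" by auto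
  have "(fu has_integral (u s - u y0) + ju) {s..t}"
    by (rule has_integral_combine[OF y0r(1) y0r(2) iu[OF y0st] ju])
  from has_integral_unique[OF this iu[OF tst]] have eu: "ju = u y0 - u t" by linarith
  have "(fv has_integral (v s - v y0) + jv) {s..t}"
    by (rule has_integral_combine[OF y0r(1) y0r(2) iv[OF y0st] jv])
  from has_integral_unique[OF this iv[OF tst]] have ev: "jv = v y0 - v t" by linarith
  define fu' where "fu' = (\<lambda>y. if y = y0 then 0 else fu y)"
  have ju': "(fu' has_integral ju) {y0..t}"
    by (rule has_integral_spike[of "{y0}" _ _ fu]) (auto simp: fu'_def ju)
  have jv': "((\<lambda>y. q0 * fv y) has_integral q0 * jv) {y0..t}"
    using has_integral_mult_right[OF jv] by simp
  have "ju \<le> q0 * jv"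
  proof (rule has_integral_le[OF ju' jv'])
    fix y assume y: "y \<in> {y0..t}"
    show "fu' y \<le> q0 * fv y"
    proof (cases "y = y0")
      case True then show ?thesis using fvnn[of y] y y0r q0pos by (auto simp: fu'_def)
    next
      case False
      then have yy: "y \<in> {s<..t}" using y y0r by auto
      have "fu y * v y \<le> fv y * u y" using cond[OF yy] upos[of y] yy by auto
      also have "\<dots> \<le> fv y * (q0 * v y)" using ule[OF y] fvnn[of y] yy
        by (intro mult_left_mono) auto
      finally have "fu y * v y \<le> (q0 * fv y) * v y" by (simp add: algebra_simps)
      then show ?thesis using vpos[of y] yy False by (auto simp: fu'_def)
    qed
  qed
  then have "u y0 - u t \<le> q0 * (v y0 - v t)" using eu ev by simp
  moreover have "u y0 = q0 * v y0" using vpos[of y0] y0r unfolding q0_def q_def by auto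
  ultimately have "q0 * v t \<le> u t" by (simp add: algebra_simps)
  then have "q0 \<le> q t" using vpos[of t] st unfolding q_def by (auto simp: divide_simps)
  then show False using qts y0r unfolding q0_def by auto
qed

lemma GC:
  fixes u v fu fv :: "real \<Rightarrow> real"
  assumes st: "s \<le> t" and cu: "continuous_on {s..t} u" and cv: "continuous_on {s..t} v"
    and iu: "\<And>y. y \<in> {s..t} \<Longrightarrow> (fu has_integral (u s - u y)) {s..y}"
    and iv: "\<And>y. y \<in> {s..t} \<Longrightarrow> (fv has_integral (v s - v y)) {s..y}"
    and fvnn: "\<And>y. y \<in> {s..t} \<Longrightarrow> 0 \<le> fv y"
    and vpos: "\<And>y. y \<in> {s..t} \<Longrightarrow> 0 < v y"
    and us: "0 < u s"
    and cond: "\<And>y. y \<in> {s<..t} \<Longrightarrow> 0 < u y \<Longrightarrow> fu y * v y \<le> fv y * u y"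
  shows "u s * v t \<le> u t * v s"
proof -
  have vmono: "v y \<le> v x" if "x \<in> {s..t}" "y \<in> {s..t}" "x \<le> y" for x y
  proof -
    have i1: "fv integrable_on {x..y}"
      using integrable_subinterval_real[OF has_integral_integrable[OF iv[OF that(2)]], of x y] that by auto
    then obtain j where j: "(fv has_integral j) {x..y}" by auto
    have "(fv has_integral (v s - v x) + j) {s..y}"
      by (rule has_integral_combine[OF _ that(3) iv[OF that(1)] j]) (use that in auto)
    from has_integral_unique[OF this iv[OF that(2)]] have "j = v x - v y" by linarith
    moreover have "0 \<le> j" by (rule has_integral_nonneg[OF j]) (use fvnn that in auto)
    ultimately show ?thesis by simp
  qed
  define c where "c = u s * v t / v s"
  have vs: "0 < v s" "0 < v t" using vpos st by auto
  have cpos: "0 < c" unfolding c_def using us vs by auto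
  have allpos: "\<forall>y\<in>{s..t}. 0 < u y"
  proof (rule ccontr)
    assume "\<not> ?thesis"
    then obtain y1 where y1: "y1 \<in> {s..t}" "u y1 \<le> 0" by force
    define A where "A = {s..t} \<inter> u -` {..c/2}"
    have clA: "closed A" unfolding A_def by (rule continuous_closed_preimage[OF cu]) auto
    have y1A: "y1 \<in> A" using y1 cpos by (auto simp: A_def)
    have bA: "bdd_below A" unfolding A_def by (rule bdd_belowI[of _ s]) auto
    define z where "z = Inf A"
    have zA: "z \<in> A" unfolding z_def using closed_contains_Inf[OF _ bA clA] y1A by auto
    have zr: "s \<le> z" "z \<le> t" "u z \<le> c/2" using zA by (auto simp: A_def)
    have "c \<le> u s" unfolding c_def using vmono[of s t] st vs us
      by (auto simp: divide_simps mult_left_mono)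
    then have usc: "c/2 \<le> u s" using cpos by simp
    obtain w where w: "s \<le> w" "w \<le> z" "u w = c/2"
      using IVT2'[of u z "c/2" s] zr usc continuous_on_subset[OF cu, of "{s..z}"] by auto
    have "w \<in> A" using w zr by (auto simp: A_def)
    then have "z \<le> w" unfolding z_def by (rule cInf_lower[OF _ bA])
    then have uz: "u z = c/2" using w by auto
    have upos: "0 < u y" if "y \<in> {s..z}" for y
    proof (cases "y = z")
      case True then show ?thesis using uz cpos by simp
    next
      case False
      then have "y < z" using that by auto
      then have "y \<notin> A" using cInf_lower[OF _ bA] unfolding z_def by force
      then show ?thesis using that zr cpos by (auto simp: A_def)
    qed
    have "u s * v z \<le> u z * v s"
      by (rule GC_pos[of s z u v fu fv])
        (use zr continuous_on_subset[OF cu, of "{s..z}"] continuous_on_subset[OF cv, of "{s..z}"]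
          iu iv fvnn vpos upos cond in auto)
    moreover have "v t \<le> v z" using vmono[of z t] zr by auto
    ultimately have "u s * v t \<le> u z * v s" using us
      by (meson mult_left_mono less_imp_le order_trans)
    then have "c \<le> u z" unfolding c_def using vs by (simp add: divide_simps)
    then show False using uz cpos by simp
  qed
  show ?thesis
    by (rule GC_pos[of s t u v fu fv]) (use st cu cv iu iv fvnn vpos allpos cond in auto)
qed

context
  fixes F f :: "real \<Rightarrow> real"
  assumes cdf: "abs_cont_cdf F f"
begin

lemma cdf_neg: "x < 0 \<Longrightarrow> F x = 0" using cdf by (auto simp: abs_cont_cdf_def)

lemma cdf_fnn: "0 \<le> x \<Longrightarrow> 0 \<le> f x" using cdf by (auto simp: abs_cont_cdf_def)

lemma cdf_int0: "0 \<le> x \<Longrightarrow> (f has_integral F x) {0..x}" using cdf by (auto simp: abs_cont_cdf_def)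

lemma cdf_lim: "(F \<longlongrightarrow> 1) at_top" using cdf by (auto simp: abs_cont_cdf_def)

lemma cdf_zero: "F 0 = 0"
proof -
  have "(f has_integral 0) {0..(0::real)}" using has_integral_refl(2)[of f 0] by simp
  from has_integral_unique[OF cdf_int0[of 0] this] show ?thesis by simp
qed

lemma cdf_int:
  assumes "0 \<le> s" "s \<le> y"
  shows "(f has_integral (F y - F s)) {s..y}"
proof -
  have "f integrable_on {s..y}"
    using integrable_subinterval_real[OF has_integral_integrable[OF cdf_int0[of y]], of s y] assms by auto
  then obtain j where j: "(f has_integral j) {s..y}" by auto
  have "(f has_integral F s + j) {0..y}"
    by (rule has_integral_combine[OF assms cdf_int0[of s] j]) (use assms in auto)
  from has_integral_unique[OF this cdf_int0[of y]] have "j = F y - F s" using assms by simp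
  then show ?thesis using j by simp
qed

lemma cdf_nn: "0 \<le> F x"
proof (cases "x < 0")
  case True then show ?thesis using cdf_neg by simp
next
  case False
  then show ?thesis using has_integral_nonneg[OF cdf_int0[of x]] cdf_fnn by auto
qed

lemma cdf_mono: "x \<le> y \<Longrightarrow> F x \<le> F y"
proof (cases "x < 0")
  case True then show ?thesis using cdf_neg[of x] cdf_nn[of y] by simp
next
  case False
  assume xy: "x \<le> y"
  have "0 \<le> F y - F x"
    using has_integral_nonneg[OF cdf_int[of x y]] cdf_fnn False xy by auto
  then show ?thesis by simp
qed

lemma cdf_le1: "F x \<le> 1"
proof -
  have "eventually (\<lambda>y. F x \<le> F y) at_top"
    using eventually_ge_at_top[of x] by eventually_elim (rule cdf_mono)
  from tendsto_le[OF _ cdf_lim tendsto_const this] show ?thesis by simp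
qed

lemma cdf_cont: assumes "0 \<le> s" shows "continuous_on {s..t} F"
proof -
  have "continuous_on {0..t} (\<lambda>x. integral {0..x} f)"
  proof (cases "0 \<le> t")
    case True
    show ?thesis
      by (rule indefinite_integral_continuous_1) (rule has_integral_integrable[OF cdf_int0[OF True]])
  qed simp
  moreover have "\<And>x. x \<in> {0..t} \<Longrightarrow> integral {0..x} f = F x"
    using cdf_int0 by (auto intro: integral_unique)
  ultimately have "continuous_on {0..t} F" by (rule continuous_on_eq)
  then show ?thesis by (rule continuous_on_subset) (use assms in auto)
qed

lemma hazard_nn: "0 \<le> x \<Longrightarrow> 0 \<le> hazard F f x"
proof -
  assume x: "0 \<le> x"
  have "0 \<le> 1 - F x" using cdf_le1[of x] by simp
  then show ?thesis unfolding hazard_def using cdf_fnn[OF x] by simp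
qed

lemma Gint:
  assumes "0 \<le> s" "s \<le> y"
  shows "(f has_integral ((1 - F s) - (1 - F y))) {s..y}"
  using cdf_int[OF assms] by simp

lemma Gcont: "0 \<le> s \<Longrightarrow> continuous_on {s..t} (\<lambda>y. 1 - F y)"
  by (rule continuous_on_diff[OF continuous_on_const cdf_cont])

end

context
  fixes \<psi> :: "real \<Rightarrow> real" and m :: nat
  assumes gen: "archimedean_generator m \<psi>"
begin

lemma psi_nn: "0 \<le> x \<Longrightarrow> 0 \<le> \<psi> x" using gen by (auto simp: archimedean_generator_def)
lemma psi_le1: "0 \<le> x \<Longrightarrow> \<psi> x \<le> 1" using gen by (auto simp: archimedean_generator_def)
lemma psi_anti: "0 \<le> x \<Longrightarrow> x \<le> y \<Longrightarrow> \<psi> y \<le> \<psi> x" using gen by (auto simp: archimedean_generator_def)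
lemma psi0: "\<psi> 0 = 1" using gen by (auto simp: archimedean_generator_def)
lemma psi_lim: "(\<psi> \<longlongrightarrow> 0) at_top" using gen by (auto simp: archimedean_generator_def)
lemma psi_cont: "continuous_on {0..} \<psi>" using gen by (auto simp: archimedean_generator_def)

lemma gi_nn: "0 \<le> gen_inv \<psi> t"
  unfolding gen_inv_def by (rule Inf_greatest) auto

lemma gi_anti: "t \<le> t' \<Longrightarrow> gen_inv \<psi> t' \<le> gen_inv \<psi> t"
  unfolding gen_inv_def by (rule Inf_superset_mono) auto

lemma gi_fin: assumes "0 < t" shows "gen_inv \<psi> t \<noteq> \<infinity>"
proof -
  have "eventually (\<lambda>x. \<psi> x < t) at_top" using order_tendstoD(2)[OF psi_lim assms] .
  then obtain N where N: "\<And>x. x \<ge> N \<Longrightarrow> \<psi> x < t" by (auto simp: eventually_at_top_linorder)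
  define x where "x = max N 0"
  have "x \<in> {x. 0 \<le> x \<and> \<psi> x \<le> t}" using N[of x] by (auto simp: x_def)
  then have "ereal x \<in> ereal ` {x. 0 \<le> x \<and> \<psi> x \<le> t}" by (rule imageI)
  then have "gen_inv \<psi> t \<le> ereal x" unfolding gen_inv_def by (rule Inf_lower)
  then show ?thesis by auto
qed

lemma gi_real:
  assumes t: "0 \<le> t" "t \<le> 1" and fin: "gen_inv \<psi> t \<noteq> \<infinity>"
  shows "\<exists>r\<ge>0. gen_inv \<psi> t = ereal r \<and> \<psi> r = t"
proof -
  define S where "S = {x. 0 \<le> x \<and> \<psi> x \<le> t}"
  have Sne: "S \<noteq> {}" using fin unfolding gen_inv_def S_def[symmetric] by (auto simp: top_ereal_def)
  have S_eq: "S = {0..} \<inter> \<psi> -` {..t}" by (auto simp: S_def)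
  have clS: "closed S" unfolding S_eq by (rule continuous_closed_preimage[OF psi_cont]) auto
  have bS: "bdd_below S" by (rule bdd_belowI[of _ 0]) (auto simp: S_def)
  define r where "r = Inf S"
  have rS: "r \<in> S" unfolding r_def using closed_contains_Inf[OF Sne bS clS] .
  have eq: "gen_inv \<psi> t = ereal r"
  proof (rule antisym)
    show "gen_inv \<psi> t \<le> ereal r" unfolding gen_inv_def S_def[symmetric]
      using rS by (intro Inf_lower) auto
    show "ereal r \<le> gen_inv \<psi> t" unfolding gen_inv_def S_def[symmetric]
      by (rule Inf_greatest) (auto simp: r_def intro: cInf_lower[OF _ bS])
  qed
  have r0: "0 \<le> r" "\<psi> r \<le> t" using rS by (auto simp: S_def)
  obtain w where w: "0 \<le> w" "w \<le> r" "\<psi> w = t"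
    using IVT2'[of \<psi> r t 0] r0 t psi0 continuous_on_subset[OF psi_cont, of "{0..r}"] by auto
  have "w \<in> S" using w by (auto simp: S_def)
  then have "r \<le> w" unfolding r_def by (rule cInf_lower[OF _ bS])
  then have "\<psi> r = t" using w by auto
  then show ?thesis using eq r0 by auto
qed

lemma ge_gi: assumes "0 \<le> t" "t \<le> 1" shows "gen_ext \<psi> (gen_inv \<psi> t) = t"
proof (cases "gen_inv \<psi> t = \<infinity>")
  case True
  then have "\<not> 0 < t" using gi_fin by auto
  then show ?thesis using True assms by (simp add: gen_ext_def)
next
  case False
  then obtain r where "r \<ge> 0" "gen_inv \<psi> t = ereal r" "\<psi> r = t" using gi_real assms by blast
  then show ?thesis by (simp add: gen_ext_def)
qed

lemma ge_nn: "0 \<le> e \<Longrightarrow> 0 \<le> gen_ext \<psi> e"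
  by (cases e) (auto simp: gen_ext_def intro: psi_nn)

lemma ge_anti: assumes "0 \<le> e" "e \<le> e'" shows "gen_ext \<psi> e' \<le> gen_ext \<psi> e"
proof (cases "e' = \<infinity>")
  case True then show ?thesis using ge_nn[OF assms(1)] by (simp add: gen_ext_def)
next
  case False
  then obtain x' where x': "e' = ereal x'" using assms by (cases e') auto
  obtain x where x: "e = ereal x" using assms False by (cases e) auto
  show ?thesis using assms x x' by (auto simp: gen_ext_def intro: psi_anti)
qed

end

lemma four_point:
  fixes l :: "real \<Rightarrow> real"
  assumes K: "\<And>x y z. x \<in> {A..B} \<Longrightarrow> x < y \<Longrightarrow> y < z \<Longrightarrow> z \<le> B \<Longrightarrow>
                l y * (z - x) \<le> (z - y) * l x + (y - x) * l z"
    and ord: "A \<le> C" "C \<le> D" "D \<le> B"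
  shows "(l C - l A) * (B - D) \<le> (l B - l D) * (C - A)"
proof (cases "A = C \<or> D = B")
  case True then show ?thesis by auto
next
  case False
  then have AC: "A < C" and DB: "D < B" using ord by auto
  define sl where "sl x y = (l y - l x) / (y - x)" for x y
  have t1: "sl x y \<le> sl x z" if "x \<in> {A..B}" "x < y" "y < z" "z \<le> B" for x y z
  proof -
    have "l y * (z - x) \<le> (z - y) * l x + (y - x) * l z" by (rule K[OF that])
    then have "(l y - l x) * (z - x) \<le> (l z - l x) * (y - x)" by (simp add: algebra_simps)
    then show ?thesis using that unfolding sl_def by (simp add: divide_simps mult.commute)
  qed
  have t2: "sl x z \<le> sl y z" if "x \<in> {A..B}" "x < y" "y < z" "z \<le> B" for x y z
  proof -
    have "l y * (z - x) \<le> (z - y) * l x + (y - x) * l z" by (rule K[OF that])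
    then have "(l z - l x) * (z - y) \<le> (l z - l y) * (z - x)" by (simp add: algebra_simps)
    then show ?thesis using that unfolding sl_def by (simp add: divide_simps mult.commute)
  qed
  have CB: "C < B" using ord DB by auto
  have "sl A C \<le> sl C B"
    using t1[of A C B] t2[of A C B] AC CB ord by auto
  also have "sl C B \<le> sl D B"
  proof (cases "C = D")
    case False
    then show ?thesis using t2[of C D B] ord DB AC by auto
  qed simp
  finally have "(l C - l A) / (C - A) \<le> (l B - l D) / (B - D)" unfolding sl_def .
  then show ?thesis using AC DB by (simp add: divide_simps mult.commute)
qed

context
  fixes \<psi> :: "real \<Rightarrow> real" and m :: nat
  assumes gen: "archimedean_generator m \<psi>" and lc: "log_convex \<psi>"
begin

lemma lc_K:
  assumes "0 \<le> x" "x < y" "y < z" "0 < \<psi> z"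
  shows "ln (\<psi> y) * (z - x) \<le> (z - y) * ln (\<psi> x) + (y - x) * ln (\<psi> z)"
proof -
  define t where "t = (z - y) / (z - x)"
  have t01: "0 < t" "t < 1" using assms by (auto simp: t_def divide_simps)
  have d: "z - x > 0" using assms by auto
  have e1: "t * (z - x) = z - y" using d by (simp add: t_def)
  have e2: "(1 - t) * (z - x) = y - x" using e1 by (simp add: algebra_simps)
  then have h: "t * z - t * x = z - y" by (simp add: algebra_simps)
  have yt: "y = t * x + (1 - t) * z" using h by (simp add: algebra_simps)
  have px: "0 < \<psi> x" and py: "0 < \<psi> y"
    using psi_anti[OF gen, of x z] psi_anti[OF gen, of y z] assms by auto
  have "\<psi> y \<le> \<psi> x powr t * \<psi> z powr (1 - t)"
    using lc assms t01 unfolding log_convex_def yt by auto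
  then have "ln (\<psi> y) \<le> ln (\<psi> x powr t * \<psi> z powr (1 - t))"
    using py px assms by (subst ln_le_cancel_iff) auto
  also have "\<dots> = t * ln (\<psi> x) + (1 - t) * ln (\<psi> z)"
    using px assms by (simp add: ln_mult ln_powr)
  finally have "ln (\<psi> y) * (z - x) \<le> (t * ln (\<psi> x) + (1 - t) * ln (\<psi> z)) * (z - x)"
    using assms by (intro mult_right_mono) auto
  also have "\<dots> = ln (\<psi> x) * (t * (z - x)) + ln (\<psi> z) * ((1 - t) * (z - x))"
    by (simp add: algebra_simps)
  also have "\<dots> = (z - y) * ln (\<psi> x) + (y - x) * ln (\<psi> z)"
    unfolding e1 e2 by simp
  finally show ?thesis .
qed

lemma lc_four:
  assumes "0 \<le> A" "A \<le> C" "C \<le> D" "D \<le> B" "0 < \<psi> B"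
  shows "(ln (\<psi> C) - ln (\<psi> A)) * (B - D) \<le> (ln (\<psi> B) - ln (\<psi> D)) * (C - A)"
proof (rule four_point[where l = "\<lambda>x. ln (\<psi> x)"])
  fix x y z assume "x \<in> {A..B}" "x < y" "y < z" "z \<le> B"
  moreover have "0 < \<psi> z" using psi_anti[OF gen, of z B] assms \<open>x \<in> {A..B}\<close> \<open>x < y\<close> \<open>y < z\<close> \<open>z \<le> B\<close> by auto
  ultimately show "ln (\<psi> y) * (z - x) \<le> (z - y) * ln (\<psi> x) + (y - x) * ln (\<psi> z)"
    using assms by (intro lc_K) auto
qed (use assms in auto)

end

lemma superadd_sum:
  fixes g :: "real \<Rightarrow> ereal"
  assumes sa: "super_additive g" and g0: "0 \<le> g 0" and fin: "finite I"
    and nn: "\<And>i. i \<in> I \<Longrightarrow> 0 \<le> s i"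
  shows "(\<Sum>i\<in>I. g (s i)) \<le> g (\<Sum>i\<in>I. s i)"
  using fin nn
proof (induction I rule: finite_induct)
  case empty then show ?case using g0 by simp
next
  case (insert j I)
  have "(\<Sum>i\<in>insert j I. g (s i)) = g (s j) + (\<Sum>i\<in>I. g (s i))" using insert by simp
  also have "\<dots> \<le> g (s j) + g (\<Sum>i\<in>I. s i)" using insert by (intro add_left_mono) auto
  also have "\<dots> \<le> g (s j + (\<Sum>i\<in>I. s i))"
  proof -
    have "0 \<le> s j" "0 \<le> (\<Sum>i\<in>I. s i)" using insert.prems by (auto intro!: sum_nonneg)
    then show ?thesis using sa unfolding super_additive_def by blast
  qed
  also have "s j + (\<Sum>i\<in>I. s i) = (\<Sum>i\<in>insert j I. s i)" using insert by simp
  finally show ?case .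
qed

lemma step2:
  assumes g1: "archimedean_generator m1 \<psi>1" and g2: "archimedean_generator m2 \<psi>2"
    and sa: "super_additive (\<lambda>x. gen_inv \<psi>2 (\<psi>1 x))" and fin: "finite I"
    and v: "\<And>i. i \<in> I \<Longrightarrow> 0 \<le> v i \<and> v i \<le> 1"
  shows "gen_ext \<psi>1 (\<Sum>i\<in>I. gen_inv \<psi>1 (v i)) \<le> gen_ext \<psi>2 (\<Sum>i\<in>I. gen_inv \<psi>2 (v i))"
proof (cases "\<exists>i\<in>I. gen_inv \<psi>1 (v i) = \<infinity>")
  case True
  then have "(\<Sum>i\<in>I. gen_inv \<psi>1 (v i)) = \<infinity>" using fin by (simp add: sum_Pinfty)
  then have "gen_ext \<psi>1 (\<Sum>i\<in>I. gen_inv \<psi>1 (v i)) = 0" by (simp add: gen_ext_def)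
  also have "0 \<le> gen_ext \<psi>2 (\<Sum>i\<in>I. gen_inv \<psi>2 (v i))"
    by (intro ge_nn[OF g2] sum_nonneg gi_nn[OF g2])
  finally show ?thesis .
next
  case False
  have "\<forall>i\<in>I. \<exists>r\<ge>0. gen_inv \<psi>1 (v i) = ereal r \<and> \<psi>1 r = v i"
    using False v gi_real[OF g1] by blast
  from bchoice[OF this] obtain s where s0: "\<forall>i\<in>I. 0 \<le> s i \<and> gen_inv \<psi>1 (v i) = ereal (s i) \<and> \<psi>1 (s i) = v i"
    by blast
  then have s: "\<And>i. i \<in> I \<Longrightarrow> 0 \<le> s i \<and> gen_inv \<psi>1 (v i) = ereal (s i) \<and> \<psi>1 (s i) = v i"
    by blast
  have sum1: "(\<Sum>i\<in>I. gen_inv \<psi>1 (v i)) = ereal (\<Sum>i\<in>I. s i)"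
  proof -
    have "(\<Sum>i\<in>I. gen_inv \<psi>1 (v i)) = (\<Sum>i\<in>I. ereal (s i))" using s by (intro sum.cong) auto
    then show ?thesis by simp
  qed
  have S0: "0 \<le> (\<Sum>i\<in>I. s i)" using s by (intro sum_nonneg) auto
  have lhs: "gen_ext \<psi>1 (\<Sum>i\<in>I. gen_inv \<psi>1 (v i)) = \<psi>1 (\<Sum>i\<in>I. s i)"
    unfolding sum1 by (simp add: gen_ext_def)
  have "(\<Sum>i\<in>I. gen_inv \<psi>2 (\<psi>1 (s i))) \<le> gen_inv \<psi>2 (\<psi>1 (\<Sum>i\<in>I. s i))"
    by (rule superadd_sum[OF sa _ fin, of s]) (use s gi_nn[OF g2] in auto)
  moreover have "(\<Sum>i\<in>I. gen_inv \<psi>2 (\<psi>1 (s i))) = (\<Sum>i\<in>I. gen_inv \<psi>2 (v i))"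
    using s by (intro sum.cong) auto
  ultimately have le: "(\<Sum>i\<in>I. gen_inv \<psi>2 (v i)) \<le> gen_inv \<psi>2 (\<psi>1 (\<Sum>i\<in>I. s i))" by simp
  have "gen_ext \<psi>2 (gen_inv \<psi>2 (\<psi>1 (\<Sum>i\<in>I. s i))) \<le> gen_ext \<psi>2 (\<Sum>i\<in>I. gen_inv \<psi>2 (v i))"
    by (rule ge_anti[OF g2 _ le]) (intro sum_nonneg gi_nn[OF g2])
  moreover have "gen_ext \<psi>2 (gen_inv \<psi>2 (\<psi>1 (\<Sum>i\<in>I. s i))) = \<psi>1 (\<Sum>i\<in>I. s i)"
    using S0 psi_nn[OF g1] psi_le1[OF g1] by (intro ge_gi[OF g2]) auto
  ultimately show ?thesis using lhs by simp
qed

lemma sum_if_split: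
  fixes X Y :: real
  shows "(\<Sum>i<p + q. if i < p then X else Y) = real p * X + real q * Y"
proof (induction q)
  case 0
  have "(\<Sum>i<p. if i < p then X else Y) = (\<Sum>i<p. X)" by (intro sum.cong) auto
  then show ?case by simp
next
  case (Suc q)
  then show ?case by (simp add: algebra_simps)
qed

lemma step3_core:
  assumes gen: "archimedean_generator m \<psi>" and lc: "log_convex \<psi>"
    and ord: "0 < b" "b \<le> d" "d \<le> c" "c \<le> a" "a \<le> 1"
    and eA: "gen_inv \<psi> a = ereal A" and eB: "gen_inv \<psi> b = ereal B"
    and eC: "gen_inv \<psi> c = ereal C" and eD: "gen_inv \<psi> d = ereal D"
    and \<kappa>: "0 \<le> \<kappa>" and d1: "0 < \<Delta>1" and d2: "0 \<le> \<Delta>2" and p: "0 < p" and q: "0 \<le> q"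
    and maj: "p * \<Delta>1 \<le> q * \<Delta>2"
    and P: "ln a - ln c \<le> \<kappa> * \<Delta>1" and Q: "\<kappa> * \<Delta>2 \<le> ln d - ln b"
  shows "p * (C - A) \<le> q * (B - D)"
proof -
  have vals: "\<psi> A = a" "\<psi> B = b" "\<psi> C = c" "\<psi> D = d" "0 \<le> A"
  proof -
    show "\<psi> A = a" "0 \<le> A" using gi_real[OF gen, of a] eA ord by auto
    show "\<psi> B = b" using gi_real[OF gen, of b] eB ord by auto
    show "\<psi> C = c" using gi_real[OF gen, of c] eC ord by auto
    show "\<psi> D = d" using gi_real[OF gen, of d] eD ord by auto
  qed
  have AC: "A \<le> C" using gi_anti[OF gen, of c a] ord eA eC by auto
  have CD: "C \<le> D" using gi_anti[OF gen, of d c] ord eC eD by auto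
  have DB: "D \<le> B" using gi_anti[OF gen, of b d] ord eB eD by auto
  have four: "(ln c - ln a) * (B - D) \<le> (ln b - ln d) * (C - A)"
    using lc_four[OF gen lc vals(5) AC CD DB] vals ord by simp
  define PP where "PP = ln a - ln c"
  define QQ where "QQ = ln d - ln b"
  have PP0: "0 \<le> PP" unfolding PP_def using ord by simp
  have QQ0: "0 \<le> QQ" unfolding QQ_def using ord by simp
  have key: "QQ * (C - A) \<le> PP * (B - D)" using four unfolding PP_def QQ_def by (simp add: algebra_simps)
  show ?thesis
  proof (cases "QQ > 0")
    case True
    have "QQ * (p * (C - A)) = p * (QQ * (C - A))" by simp
    also have "\<dots> \<le> p * (PP * (B - D))" using key p by (intro mult_left_mono) auto
    also have "\<dots> \<le> p * ((\<kappa> * \<Delta>1) * (B - D))"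
      using P DB p unfolding PP_def by (intro mult_left_mono mult_right_mono) auto
    also have "\<dots> = (\<kappa> * (B - D)) * (p * \<Delta>1)" by simp
    also have "\<dots> \<le> (\<kappa> * (B - D)) * (q * \<Delta>2)" using maj \<kappa> DB by (intro mult_left_mono) auto
    also have "\<dots> = (q * (B - D)) * (\<kappa> * \<Delta>2)" by simp
    also have "\<dots> \<le> (q * (B - D)) * QQ" using Q q DB unfolding QQ_def by (intro mult_left_mono) auto
    finally have "QQ * (p * (C - A)) \<le> QQ * (q * (B - D))" by (simp add: ac_simps)
    then show ?thesis using True by simp
  next
    case False
    then have "QQ = 0" using QQ0 by simp
    then have "\<kappa> * \<Delta>2 \<le> 0" using Q unfolding QQ_def by simp
    moreover have "0 \<le> \<kappa> * \<Delta>2" using \<kappa> d2 by simp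
    ultimately have "\<kappa> * \<Delta>2 = 0" by simp
    then have "\<kappa> = 0 \<or> \<Delta>2 = 0" by simp
    then show ?thesis
    proof
      assume "\<Delta>2 = 0"
      then have "p * \<Delta>1 \<le> 0" using maj by simp
      moreover have "0 < p * \<Delta>1" using p d1 by simp
      ultimately show ?thesis by simp
    next
      assume "\<kappa> = 0"
      then have "ln a \<le> ln c" using P by simp
      then have "a \<le> c" using ord by simp
      then have "a = c" using ord by simp
      then have "A = C" using eA eC by simp
      then show ?thesis using q DB by simp
    qed
  qed
qed

lemma exp_int:
  fixes s y \<rho> :: real
  assumes "s \<le> y"
  shows "((\<lambda>y. \<rho> * exp (- (\<rho> * y))) has_integral (exp (- (\<rho> * s)) - exp (- (\<rho> * y)))) {s..y}"
proof -
  have "((\<lambda>y. \<rho> * exp (- (\<rho> * y))) has_integral ((\<lambda>y. - exp (- (\<rho> * y))) y - (\<lambda>y. - exp (- (\<rho> * y))) s)) {s..y}"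
  proof (rule fundamental_theorem_of_calculus[OF assms])
    fix w :: real
    have "((\<lambda>y. - exp (- (\<rho> * y))) has_real_derivative (\<rho> * exp (- (\<rho> * w)))) (at w)"
      by (auto intro!: derivative_eq_intros)
    then show "((\<lambda>y. - exp (- (\<rho> * y))) has_vector_derivative (\<rho> * exp (- (\<rho> * w)))) (at w within {s..y})"
      by (simp add: has_real_derivative_iff_has_vector_derivative has_vector_derivative_at_within)
  qed
  then show ?thesis by simp
qed

lemma cmp_cdf:
  assumes c1: "abs_cont_cdf F1 f1" and c2: "abs_cont_cdf F2 f2"
    and st: "0 \<le> s" "s \<le> t" and pos2: "\<And>y. y \<in> {s..t} \<Longrightarrow> 0 < 1 - F2 y"
    and pos1: "0 < 1 - F1 s"
    and hz: "\<And>y. y \<in> {s<..t} \<Longrightarrow> hazard F1 f1 y \<le> hazard F2 f2 y"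
  shows "(1 - F1 s) * (1 - F2 t) \<le> (1 - F1 t) * (1 - F2 s)"
proof (rule GC[where fu = f1 and fv = f2])
  fix y assume y: "y \<in> {s<..t}" "0 < 1 - F1 y"
  have p2: "0 < 1 - F2 y" using pos2 y by auto
  have "f1 y / (1 - F1 y) \<le> f2 y / (1 - F2 y)" using hz[OF y(1)] by (simp add: hazard_def)
  then show "f1 y * (1 - F2 y) \<le> f2 y * (1 - F1 y)" using y p2 by (simp add: divide_simps)
qed (use st pos1 pos2 Gint[OF c1] Gint[OF c2] Gcont[OF c1] Gcont[OF c2] cdf_fnn[OF c2] in auto)

lemma cmp_exp_lower:
  assumes c: "abs_cont_cdf F f" and st: "0 \<le> s" "s \<le> t" and \<rho>: "0 \<le> \<rho>"
    and pos: "0 < 1 - F s"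
    and hz: "\<And>y. y \<in> {s<..t} \<Longrightarrow> hazard F f y \<le> \<rho>"
  shows "(1 - F s) * exp (- (\<rho> * t)) \<le> (1 - F t) * exp (- (\<rho> * s))"
proof (rule GC[where fu = f and fv = "\<lambda>y. \<rho> * exp (- (\<rho> * y))"])
  fix y assume y: "y \<in> {s<..t}" "0 < 1 - F y"
  have "f y / (1 - F y) \<le> \<rho>" using hz[OF y(1)] by (simp add: hazard_def)
  then have "f y \<le> \<rho> * (1 - F y)" using y by (simp add: divide_simps)
  then show "f y * exp (- (\<rho> * y)) \<le> \<rho> * exp (- (\<rho> * y)) * (1 - F y)"
    by (simp add: mult_right_mono mult.commute mult.left_commute)
qed (use st pos \<rho> Gint[OF c] Gcont[OF c] exp_int in \<open>auto intro!: continuous_intros\<close>)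

lemma cmp_exp_upper:
  assumes c: "abs_cont_cdf F f" and st: "0 \<le> s" "s \<le> t"
    and pos: "\<And>y. y \<in> {s..t} \<Longrightarrow> 0 < 1 - F y"
    and hz: "\<And>y. y \<in> {s<..t} \<Longrightarrow> \<rho> \<le> hazard F f y"
  shows "exp (- (\<rho> * s)) * (1 - F t) \<le> exp (- (\<rho> * t)) * (1 - F s)"
proof (rule GC[where fv = f and fu = "\<lambda>y. \<rho> * exp (- (\<rho> * y))"])
  fix y assume y: "y \<in> {s<..t}"
  have p: "0 < 1 - F y" using pos y by auto
  have "\<rho> \<le> f y / (1 - F y)" using hz[OF y] by (simp add: hazard_def)
  then have "\<rho> * (1 - F y) \<le> f y" using p by (simp add: divide_simps)
  then show "\<rho> * exp (- (\<rho> * y)) * (1 - F y) \<le> f y * exp (- (\<rho> * y))"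
    by (simp add: mult_right_mono mult.commute mult.left_commute)
qed (use st pos Gint[OF c] Gcont[OF c] exp_int cdf_fnn[OF c] in \<open>auto intro!: continuous_intros\<close>)

lemma Min_gt_iff_all:
  fixes g :: "nat \<Rightarrow> real"
  assumes "0 < k"
  shows "(x < Min (g ` {..<k})) = (\<forall>i<k. x < g i)"
proof -
  have "g ` {..<k} \<noteq> {}" using assms by auto
  then show ?thesis by (subst Min_gr_iff) auto
qed

theorem theorem3p10:
  fixes n1 n2 n1s n2s :: nat
    and M :: "'a measure" and N :: "'b measure"
    and X :: "nat \<Rightarrow> 'a \<Rightarrow> real" and Y :: "nat \<Rightarrow> 'b \<Rightarrow> real"
    and F1 F2 f1 f2 psi1 psi2 :: "real \<Rightarrow> real"
    and lam1 lam2 mu1 mu2 :: real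
  assumes nbounds: "1 \<le> n1" "n1 \<le> n1s" "n1s \<le> n2s" "n2s \<le> n2"
    and M: "prob_space M" and N: "prob_space N"
    and F1: "abs_cont_cdf F1 f1" and F2: "abs_cont_cdf F2 f2"
    and Xrv: "\<And>i. i < n1 + n2 \<Longrightarrow> X i \<in> borel_measurable M"
    and Xnn: "\<And>i \<omega>. i < n1 + n2 \<Longrightarrow> \<omega> \<in> space M \<Longrightarrow> 0 \<le> X i \<omega>"
    and Xm1: "\<And>i x. i < n1 \<Longrightarrow> measure M {\<omega> \<in> space M. X i \<omega> \<le> x} = F1 (lam1 * x)"
    and Xm2: "\<And>i x. n1 \<le> i \<Longrightarrow> i < n1 + n2 \<Longrightarrow>
                measure M {\<omega> \<in> space M. X i \<omega> \<le> x} = F2 (lam2 * x)"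
    and Yrv: "\<And>i. i < n1s + n2s \<Longrightarrow> Y i \<in> borel_measurable N"
    and Ynn: "\<And>i \<omega>. i < n1s + n2s \<Longrightarrow> \<omega> \<in> space N \<Longrightarrow> 0 \<le> Y i \<omega>"
    and Ym1: "\<And>i x. i < n1s \<Longrightarrow> measure N {\<omega> \<in> space N. Y i \<omega> \<le> x} = F1 (mu1 * x)"
    and Ym2: "\<And>i x. n1s \<le> i \<Longrightarrow> i < n1s + n2s \<Longrightarrow>
                measure N {\<omega> \<in> space N. Y i \<omega> \<le> x} = F2 (mu2 * x)"
    and gen1: "archimedean_generator (n1 + n2) psi1"
    and gen2: "archimedean_generator (n1s + n2s) psi2"
    and copX: "arch_survival_copula M (n1 + n2) X
                 (\<lambda>i x. if i < n1 then 1 - F1 (lam1 * x) else 1 - F2 (lam2 * x)) psi1"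
    and copY: "arch_survival_copula N (n1s + n2s) Y
                 (\<lambda>i x. if i < n1s then 1 - F1 (mu1 * x) else 1 - F2 (mu2 * x)) psi2"
    and hr: "\<And>x. 0 < x \<Longrightarrow> hazard F1 f1 x \<le> hazard F2 f2 x"
    and lam: "0 < lam1" "lam1 \<le> lam2"
    and mu: "0 < mu1" "mu1 \<le> mu2"
    and nmaj: "wmaj [real n1, real n2] [real n1s, real n2s]"
    and sup: "super_additive (\<lambda>x. gen_inv psi2 (psi1 x))"
    and logc: "log_convex psi1 \<or> log_convex psi2"
    and incr: "mono_on {0<..} (hazard F1 f1) \<or> mono_on {0<..} (hazard F2 f2)"
    and pmaj: "wmaj (replicate n1s lam1 @ replicate n2s lam2) (replicate n1s mu1 @ replicate n2s mu2)"
  shows "\<forall>x. measure M {\<omega> \<in> space M. Min ((\<lambda>i. X i \<omega>) ` {..<n1 + n2}) > x}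
           \<le> measure N {\<omega> \<in> space N. Min ((\<lambda>i. Y i \<omega>) ` {..<n1s + n2s}) > x}"
proof
  fix x :: real
  define n where "n = n1 + n2"
  define ns where "ns = n1s + n2s"
  have n_pos: "0 < n" "0 < ns" using nbounds by (auto simp: n_def ns_def)
  have setM: "{\<omega> \<in> space M. Min ((\<lambda>i. X i \<omega>) ` {..<n1 + n2}) > x}
      = {\<omega> \<in> space M. \<forall>i<n. X i \<omega> > x}"
    using Min_gt_iff_all[OF n_pos(1)] by (auto simp: n_def)
  have setN: "{\<omega> \<in> space N. Min ((\<lambda>i. Y i \<omega>) ` {..<n1s + n2s}) > x}
      = {\<omega> \<in> space N. \<forall>i<ns. Y i \<omega> > x}"
    using Min_gt_iff_all[OF n_pos(2)] by (auto simp: ns_def)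
  show "measure M {\<omega> \<in> space M. Min ((\<lambda>i. X i \<omega>) ` {..<n1 + n2}) > x}
           \<le> measure N {\<omega> \<in> space N. Min ((\<lambda>i. Y i \<omega>) ` {..<n1s + n2s}) > x}"
  proof (cases "x < 0")
    case True
    have "{\<omega> \<in> space N. \<forall>i<ns. Y i \<omega> > x} = space N"
      using Ynn True by (force simp: ns_def)
    then have "measure N {\<omega> \<in> space N. Min ((\<lambda>i. Y i \<omega>) ` {..<n1s + n2s}) > x} = 1"
      unfolding setN using prob_space.prob_space[OF N] by simp
    moreover have "measure M {\<omega> \<in> space M. Min ((\<lambda>i. X i \<omega>) ` {..<n1 + n2}) > x} \<le> 1"
      using prob_space.prob_le_1[OF M] by simp
    ultimately show ?thesis by simp
  next
    case False
    then have x0: "0 \<le> x" by simp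
    have maj: "real n1s * mu1 + real n2s * mu2 \<le> real n1s * lam1 + real n2s * lam2"
      "real n2s * mu2 \<le> real n2s * lam2"
    proof -
      define L where "L = replicate n1s lam1 @ replicate n2s lam2"
      define U where "U = replicate n1s mu1 @ replicate n2s mu2"
      have sL: "sort L = L" by (rule sorted_sort_id) (use lam in \<open>auto simp: L_def sorted_append\<close>)
      have sU: "sort U = U" by (rule sorted_sort_id) (use mu in \<open>auto simp: U_def sorted_append\<close>)
      have lens: "length L = ns" "length U = ns" by (auto simp: L_def U_def ns_def)
      have nL: "L ! i = (if i < n1s then lam1 else lam2)" if "i < ns" for i
        using that by (simp add: L_def nth_append ns_def)
      have nU: "U ! i = (if i < n1s then mu1 else mu2)" if "i < ns" for i
        using that by (simp add: U_def nth_append ns_def)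
      have W: "\<And>l. l < ns \<Longrightarrow> (\<Sum>i=l..<ns. U ! i) \<le> (\<Sum>i=l..<ns. L ! i)"
        using pmaj unfolding wmaj_def L_def[symmetric] U_def[symmetric] sL sU lens by auto
      have s0L: "(\<Sum>i=0..<ns. L ! i) = real n1s * lam1 + real n2s * lam2"
      proof -
        have "(\<Sum>i=0..<ns. L ! i) = (\<Sum>i<n1s + n2s. if i < n1s then lam1 else lam2)"
          unfolding atLeast0LessThan by (intro sum.cong) (auto simp: nL ns_def)
        then show ?thesis by (simp add: sum_if_split)
      qed
      have s0U: "(\<Sum>i=0..<ns. U ! i) = real n1s * mu1 + real n2s * mu2"
      proof -
        have "(\<Sum>i=0..<ns. U ! i) = (\<Sum>i<n1s + n2s. if i < n1s then mu1 else mu2)"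
          unfolding atLeast0LessThan by (intro sum.cong) (auto simp: nU ns_def)
        then show ?thesis by (simp add: sum_if_split)
      qed
      have s1L: "(\<Sum>i=n1s..<ns. L ! i) = real n2s * lam2"
      proof -
        have "(\<Sum>i=n1s..<ns. L ! i) = (\<Sum>i=n1s..<ns. lam2)"
          by (intro sum.cong) (auto simp: nL)
        then show ?thesis by (simp add: ns_def)
      qed
      have s1U: "(\<Sum>i=n1s..<ns. U ! i) = real n2s * mu2"
      proof -
        have "(\<Sum>i=n1s..<ns. U ! i) = (\<Sum>i=n1s..<ns. mu2)"
          by (intro sum.cong) (auto simp: nU)
        then show ?thesis by (simp add: ns_def)
      qed
      show "real n1s * mu1 + real n2s * mu2 \<le> real n1s * lam1 + real n2s * lam2"
        using W[of 0] n_pos s0L s0U by simp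
      show "real n2s * mu2 \<le> real n2s * lam2"
        using W[of n1s] nbounds s1L s1U by (simp add: ns_def)
    qed
    have mu2lam2: "mu2 \<le> lam2" using maj(2) nbounds by simp
    have nmaj': "real n1s + real n2s \<le> real n1 + real n2"
    proof -
      have s1: "sort [real n1, real n2] = [real n1, real n2]" by (rule sorted_sort_id) (use nbounds in simp)
      have s2: "sort [real n1s, real n2s] = [real n1s, real n2s]" by (rule sorted_sort_id) (use nbounds in simp)
      have H: "\<forall>l<Suc (Suc 0). (1 - real l) * real n1s + real n2s \<le> (1 - real l) * real n1 + real n2"
        using nmaj unfolding wmaj_def s1 s2 by simp
      show ?thesis using H[rule_format, of 0] by simp
    qed
    define a where "a = 1 - F1 (lam1 * x)"
    define b where "b = 1 - F2 (lam2 * x)"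
    define c where "c = 1 - F1 (mu1 * x)"
    define d where "d = 1 - F2 (mu2 * x)"
    have abcd01: "0 \<le> a" "a \<le> 1" "0 \<le> b" "b \<le> 1" "0 \<le> c" "c \<le> 1" "0 \<le> d" "d \<le> 1"
      unfolding a_def b_def c_def d_def
      using cdf_nn[OF F1] cdf_le1[OF F1] cdf_nn[OF F2] cdf_le1[OF F2] by auto
    have G1mono: "y \<le> z \<Longrightarrow> 1 - F1 z \<le> 1 - F1 y" for y z using cdf_mono[OF F1, of y z] by simp
    have G2mono: "y \<le> z \<Longrightarrow> 1 - F2 z \<le> 1 - F2 y" for y z using cdf_mono[OF F2, of y z] by simp
    have lhs: "measure M {\<omega> \<in> space M. Min ((\<lambda>i. X i \<omega>) ` {..<n1 + n2}) > x}
        = gen_ext psi1 (\<Sum>i<n. gen_inv psi1 (if i < n1 then a else b))"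
      unfolding setM using copX unfolding arch_survival_copula_def
      by (auto simp: n_def a_def b_def if_distrib cong: if_cong)
    have rhs: "measure N {\<omega> \<in> space N. Min ((\<lambda>i. Y i \<omega>) ` {..<n1s + n2s}) > x}
        = gen_ext psi2 (\<Sum>i<ns. gen_inv psi2 (if i < n1s then c else d))"
      unfolding setN using copY unfolding arch_survival_copula_def
      by (auto simp: ns_def c_def d_def if_distrib cong: if_cong)
    have rhs_nn: "0 \<le> gen_ext psi2 (\<Sum>i<ns. gen_inv psi2 (if i < n1s then c else d))"
      by (intro ge_nn[OF gen2] sum_nonneg gi_nn[OF gen2])
    show ?thesis
    proof (cases "a = 0 \<or> b = 0")
      case True
      obtain j where j: "j < n" "(if j < n1 then a else b) = 0"
      proof (cases "a = 0")
        case True then show ?thesis using that[of 0] nbounds by (auto simp: n_def)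
      next
        case False then have "b = 0" using \<open>a = 0 \<or> b = 0\<close> by simp
        then show ?thesis using that[of n1] nbounds by (auto simp: n_def)
      qed
      have "(\<Sum>i\<in>{j}. gen_inv psi1 (if i < n1 then a else b)) \<le> (\<Sum>i<n. gen_inv psi1 (if i < n1 then a else b))"
        by (rule sum_mono2) (use j gi_nn[OF gen1] in auto)
      then have "gen_inv psi1 0 \<le> (\<Sum>i<n. gen_inv psi1 (if i < n1 then a else b))" using j by simp
      then have "gen_ext psi1 (\<Sum>i<n. gen_inv psi1 (if i < n1 then a else b)) \<le> gen_ext psi1 (gen_inv psi1 0)"
        by (rule ge_anti[OF gen1 gi_nn[OF gen1]])
      also have "\<dots> = 0" by (rule ge_gi[OF gen1]) auto
      finally show ?thesis unfolding lhs rhs using rhs_nn by simp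
    next
      case False
      then have apos: "0 < a" and bpos: "0 < b" using abcd01 by auto
      have lx: "lam1 * x \<le> lam2 * x" "mu1 * x \<le> mu2 * x" "mu2 * x \<le> lam2 * x"
        "0 \<le> lam1 * x" "0 \<le> mu1 * x"
        using x0 lam mu mu2lam2 by (auto intro: mult_right_mono)
      have G2pos: "0 < 1 - F2 y" if "y \<le> lam2 * x" for y
        using G2mono[OF that] bpos unfolding b_def by simp
      have hz0: "0 < y \<Longrightarrow> hazard F1 f1 y \<le> hazard F2 f2 y" for y by (rule hr)
      have cmp0: "(1 - F1 0) * (1 - F2 t) \<le> (1 - F1 t) * (1 - F2 0)" if "0 \<le> t" "t \<le> lam2 * x" for t
        by (rule cmp_cdf[OF F1 F2]) (use that G2pos hr cdf_zero[OF F1] in auto)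
      have ba: "b \<le> a"
      proof -
        have "1 - F2 (lam1 * x) \<le> 1 - F1 (lam1 * x)"
          using cmp0[of "lam1 * x"] lx cdf_zero[OF F1] cdf_zero[OF F2] by simp
        then show ?thesis unfolding a_def b_def using G2mono[OF lx(1)] by simp
      qed
      have nsn: "ns \<le> n"
      proof -
        have "real ns \<le> real n" using nmaj' by (simp add: n_def ns_def)
        then show ?thesis by simp
      qed
      define Va where "Va = (\<lambda>\<psi>. (\<Sum>i<ns. gen_inv \<psi> (if i < n1s then a else b)))"
      define Vc where "Vc = (\<lambda>\<psi>. (\<Sum>i<ns. gen_inv \<psi> (if i < n1s then c else d)))"
      have Va_nn: "0 \<le> Va \<psi>" for \<psi> unfolding Va_def gen_inv_def
        by (intro sum_nonneg Inf_greatest) auto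
      have Vc_nn: "0 \<le> Vc \<psi>" for \<psi> unfolding Vc_def gen_inv_def
        by (intro sum_nonneg Inf_greatest) auto
      have step1: "gen_ext psi1 (\<Sum>i<n. gen_inv psi1 (if i < n1 then a else b)) \<le> gen_ext psi1 (Va psi1)"
      proof -
        have "Va psi1 \<le> (\<Sum>i<ns. gen_inv psi1 (if i < n1 then a else b))"
          unfolding Va_def by (rule sum_mono) (use nbounds gi_anti[OF gen1 ba] in auto)
        also have "\<dots> \<le> (\<Sum>i<n. gen_inv psi1 (if i < n1 then a else b))"
          by (rule sum_mono2) (use nsn gi_nn[OF gen1] in auto)
        finally show ?thesis by (rule ge_anti[OF gen1 Va_nn])
      qed
      have Vle: "Vc \<psi> \<le> Va \<psi>" if g\<psi>: "archimedean_generator m \<psi>" "log_convex \<psi>" for \<psi> m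
      proof (cases "lam1 * x < mu1 * x")
        case False
        have ac: "a \<le> c" unfolding a_def c_def using G1mono False by simp
        have bd: "b \<le> d" unfolding b_def d_def using G2mono lx(3) by simp
        show ?thesis unfolding Va_def Vc_def
          by (rule sum_mono) (use gi_anti[OF g\<psi>(1) ac] gi_anti[OF g\<psi>(1) bd] in auto)
      next
        case True
        have xpos: "0 < x" using True x0 by (cases "x = 0") auto
        have l1m1: "lam1 < mu1" using True xpos by simp
        have m1x: "0 < mu1 * x" using mu xpos by simp
        obtain rho where rho: "0 \<le> rho"
          "\<And>y. y \<in> {lam1 * x<..mu1 * x} \<Longrightarrow> hazard F1 f1 y \<le> rho"
          "\<And>y. y \<in> {mu2 * x<..lam2 * x} \<Longrightarrow> rho \<le> hazard F2 f2 y"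
        proof (cases "mono_on {0<..} (hazard F1 f1)")
          case True
          show ?thesis
          proof (rule that[of "hazard F1 f1 (mu1 * x)"])
            show "0 \<le> hazard F1 f1 (mu1 * x)" using hazard_nn[OF F1] m1x by simp
            fix y assume y: "y \<in> {lam1 * x<..mu1 * x}"
            then have "0 < y" using lx by auto
            then show "hazard F1 f1 y \<le> hazard F1 f1 (mu1 * x)"
              using mono_onD[OF True, of y "mu1 * x"] y m1x by auto
          next
            fix y assume y: "y \<in> {mu2 * x<..lam2 * x}"
            then have y0: "0 < y" "mu1 * x \<le> y" using lx m1x by auto
            then have "hazard F1 f1 (mu1 * x) \<le> hazard F1 f1 y"
              using mono_onD[OF True, of "mu1 * x" y] m1x by auto
            also have "\<dots> \<le> hazard F2 f2 y" using hr y0 by simp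
            finally show "hazard F1 f1 (mu1 * x) \<le> hazard F2 f2 y" .
          qed
        next
          case False
          then have mono2: "mono_on {0<..} (hazard F2 f2)" using incr by simp
          show ?thesis
          proof (rule that[of "hazard F2 f2 (mu1 * x)"])
            show "0 \<le> hazard F2 f2 (mu1 * x)" using hazard_nn[OF F2] m1x by simp
            fix y assume y: "y \<in> {lam1 * x<..mu1 * x}"
            then have y0: "0 < y" using lx by auto
            have "hazard F1 f1 y \<le> hazard F2 f2 y" using hr y0 by simp
            also have "\<dots> \<le> hazard F2 f2 (mu1 * x)"
              using mono_onD[OF mono2, of y "mu1 * x"] y y0 m1x by auto
            finally show "hazard F1 f1 y \<le> hazard F2 f2 (mu1 * x)" .
          next
            fix y assume y: "y \<in> {mu2 * x<..lam2 * x}"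
            then have y0: "0 < y" "mu1 * x \<le> y" using lx m1x by auto
            then show "hazard F2 f2 (mu1 * x) \<le> hazard F2 f2 y"
              using mono_onD[OF mono2, of "mu1 * x" y] m1x by auto
          qed
        qed
        have bd: "b \<le> d" unfolding b_def d_def using G2mono lx(3) by simp
        have dc: "d \<le> c"
        proof -
          have "1 - F2 (mu1 * x) \<le> 1 - F1 (mu1 * x)"
            using cmp0[of "mu1 * x"] lx cdf_zero[OF F1] cdf_zero[OF F2] by simp
          then show ?thesis unfolding c_def d_def using G2mono[OF lx(2)] by simp
        qed
        have ca: "c \<le> a" unfolding a_def c_def using G1mono True by simp
        have cpos: "0 < c" and dpos: "0 < d" using bpos bd dc by auto
        have low: "a * exp (- (rho * (mu1 * x))) \<le> c * exp (- (rho * (lam1 * x)))"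
          unfolding a_def c_def
          by (rule cmp_exp_lower[OF F1]) (use lx True rho apos in \<open>auto simp: a_def\<close>)
        have upp: "exp (- (rho * (mu2 * x))) * b \<le> exp (- (rho * (lam2 * x))) * d"
          unfolding b_def d_def
          by (rule cmp_exp_upper[OF F2]) (use lx rho G2pos in auto)
        have P: "ln a - ln c \<le> (rho * x) * (mu1 - lam1)"
        proof -
          have "ln (a * exp (- (rho * (mu1 * x)))) \<le> ln (c * exp (- (rho * (lam1 * x))))"
            using low apos cpos by simp
          then have "ln a - rho * (mu1 * x) \<le> ln c - rho * (lam1 * x)"
            using apos cpos by (simp add: ln_mult)
          moreover have "(rho * x) * (mu1 - lam1) = rho * (mu1 * x) - rho * (lam1 * x)"
            by (simp add: algebra_simps)
          ultimately show ?thesis by linarith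
        qed
        have Q: "(rho * x) * (lam2 - mu2) \<le> ln d - ln b"
        proof -
          have "ln (exp (- (rho * (mu2 * x))) * b) \<le> ln (exp (- (rho * (lam2 * x))) * d)"
            using upp bpos dpos by simp
          then have "ln b - rho * (mu2 * x) \<le> ln d - rho * (lam2 * x)"
            using bpos dpos by (simp add: ln_mult)
          moreover have "(rho * x) * (lam2 - mu2) = rho * (lam2 * x) - rho * (mu2 * x)"
            by (simp add: algebra_simps)
          ultimately show ?thesis by linarith
        qed
        have fin: "\<exists>r. gen_inv \<psi> t = ereal r" if "0 < t" "t \<le> 1" for t
          using gi_real[OF g\<psi>(1), of t] gi_fin[OF g\<psi>(1) that(1)] that by auto
        obtain A where eA: "gen_inv \<psi> a = ereal A" using fin[of a] apos abcd01 by auto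
        obtain B where eB: "gen_inv \<psi> b = ereal B" using fin[of b] bpos abcd01 by auto
        obtain C where eC: "gen_inv \<psi> c = ereal C" using fin[of c] cpos abcd01 by auto
        obtain D where eD: "gen_inv \<psi> d = ereal D" using fin[of d] dpos abcd01 by auto
        have majd: "real n1s * (mu1 - lam1) \<le> real n2s * (lam2 - mu2)"
          using maj(1) by (simp add: algebra_simps)
        have core: "real n1s * (C - A) \<le> real n2s * (B - D)"
          by (rule step3_core[OF g\<psi> bpos bd dc ca abcd01(2) eA eB eC eD _ _ _ _ _ majd P Q])
            (use rho xpos l1m1 mu2lam2 nbounds in auto)
        have sa: "Va \<psi> = ereal (real n1s * A + real n2s * B)"
        proof -
          have "Va \<psi> = (\<Sum>i<ns. ereal (if i < n1s then A else B))"
            unfolding Va_def by (intro sum.cong) (auto simp: eA eB)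
          also have "\<dots> = ereal (\<Sum>i<n1s + n2s. if i < n1s then A else B)" by (simp add: ns_def)
          finally show ?thesis by (simp add: sum_if_split)
        qed
        have sc: "Vc \<psi> = ereal (real n1s * C + real n2s * D)"
        proof -
          have "Vc \<psi> = (\<Sum>i<ns. ereal (if i < n1s then C else D))"
            unfolding Vc_def by (intro sum.cong) (auto simp: eC eD)
          also have "\<dots> = ereal (\<Sum>i<n1s + n2s. if i < n1s then C else D)" by (simp add: ns_def)
          finally show ?thesis by (simp add: sum_if_split)
        qed
        show ?thesis unfolding sa sc using core by (simp add: algebra_simps)
      qed
      have v01: "\<And>p q i. 0 \<le> p \<Longrightarrow> p \<le> 1 \<Longrightarrow> 0 \<le> q \<Longrightarrow> q \<le> 1 \<Longrightarrow>
          0 \<le> (if i < n1s then p else q) \<and> (if i < n1s then p else q) \<le> 1" by auto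
      have "gen_ext psi1 (Va psi1) \<le> gen_ext psi2 (Vc psi2)"
        using logc
      proof
        assume lc1: "log_convex psi1"
        have "gen_ext psi1 (Va psi1) \<le> gen_ext psi1 (Vc psi1)"
          by (rule ge_anti[OF gen1 Vc_nn Vle[OF gen1 lc1]])
        also have "\<dots> \<le> gen_ext psi2 (Vc psi2)"
          unfolding Vc_def
          by (rule step2[OF gen1 gen2 sup, of "{..<ns}" "\<lambda>i. if i < n1s then c else d", simplified])
            (use abcd01 in auto)
        finally show ?thesis .
      next
        assume lc2: "log_convex psi2"
        have "gen_ext psi1 (Va psi1) \<le> gen_ext psi2 (Va psi2)"
          unfolding Va_def
          by (rule step2[OF gen1 gen2 sup, of "{..<ns}" "\<lambda>i. if i < n1s then a else b", simplified])
            (use abcd01 in auto)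
        also have "\<dots> \<le> gen_ext psi2 (Vc psi2)"
          by (rule ge_anti[OF gen2 Vc_nn Vle[OF gen2 lc2]])
        finally show ?thesis .
      qed
      with step1 show ?thesis unfolding lhs rhs Vc_def by simp
    qed
  qed
qed

end
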